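(* Let $X$ be a finitely triangulable space (with a metric inducing its topology), let $k\ge0$, and let $A\subseteq C(X,[0,1]^n)$ be a family of continuous functions that is uniformly Lipschitz and closed (with respect to the supremum norm). Then the image $\{[H_k(f)]: f\in A\}$ of $A$ in $\mathcal{Q}_n$ is compact.
   Context: Fix a field $\mathbb{k}$. For continuous $f:X\to\mathbb{R}^n$, $H_k(f)$ is the $n$-parameter persistence module $s\mapsto H_k(\{x\in X:f(x)\ll s\};\mathbb{k})$ (singular homology, maps induced by inclusion), where $s\ll t$ means $s_i<t_i$ for all $i$. An $n$-parameter persistence module is a functor $\mathbf{R}^n\to\mathbf{Vect}_{\mathbb{k}}$ ($\mathbf{R}^n$ with componentwise order); it is q-tame if $V_{s,t}$ has finite rank whenever $s\ll t$ and ephemeral if $V_{s,t}=0$ whenever $s\ll t$. The observable category is the Serre quotient of persistence modules by ephemeral ones. $\mathcal{Q}_n$ is the set of isomorphism classes of q-tame objects of the observable category, endowed with the interleaving distance $d_I$ (infimum of $\varepsilon\ge0$ admitting morphisms $f:V\to W[\varepsilon]$, $g:W\to V[\varepsilon]$ whose composites $g[\varepsilon]f$, $f[\varepsilon]g$ are the structure-map morphisms to the $2\varepsilon$-shifts, where $V[\varepsilon]_s=V_{s+\varepsilon}$ with $s+\varepsilon$ adding $\varepsilon$ to each coordinate). *)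

theory Defs
  imports "HOL-Homology.Homology" "HOL-Analysis.Analysis"
begin

definition fchain :: "nat \<Rightarrow> 'a topology \<Rightarrow> (((nat \<Rightarrow> real) \<Rightarrow> 'a) \<Rightarrow> 'k::field) \<Rightarrow> bool" where
  "fchain p T c \<longleftrightarrow> finite {\<sigma>. c \<sigma> \<noteq> 0} \<and> (\<forall>\<sigma>. c \<sigma> \<noteq> 0 \<longrightarrow> singular_simplex p T \<sigma>)"

definition fboundary :: "nat \<Rightarrow> (((nat \<Rightarrow> real) \<Rightarrow> 'a) \<Rightarrow> 'k::field)
                           \<Rightarrow> (((nat \<Rightarrow> real) \<Rightarrow> 'a) \<Rightarrow> 'k)" where
  "fboundary p c =
     (if p = 0 then (\<lambda>\<tau>. 0)
      else (\<lambda>\<tau>. \<Sum>\<sigma>\<in>{\<sigma>. c \<sigma> \<noteq> 0}.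
                  c \<sigma> * (\<Sum>i\<in>{i. i \<le> p \<and> singular_face p i \<sigma> = \<tau>}. (-1) ^ i)))"

definition fcycles :: "nat \<Rightarrow> 'a topology \<Rightarrow> ((((nat \<Rightarrow> real) \<Rightarrow> 'a) \<Rightarrow> 'k::field) set)" where
  "fcycles p T = {c. fchain p T c \<and> fboundary p c = (\<lambda>\<tau>. 0)}"

definition fboundaries :: "nat \<Rightarrow> 'a topology \<Rightarrow> ((((nat \<Rightarrow> real) \<Rightarrow> 'a) \<Rightarrow> 'k::field) set)" where
  "fboundaries p T = {fboundary (Suc p) d | d. fchain (Suc p) T d}"

text \<open>H_p(T;'k) is the quotient fcycles p T / fboundaries p T.\<close>

text \<open>A pair (Z,B) of families of subspaces indexed by R^n (here real^'n) represents the
persistence module s \<mapsto> Z s / B s, with structure maps induced by the identity on chains.\<close>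

type_synonym ('n, 'c) qpmod = "(real^'n \<Rightarrow> 'c set) \<times> (real^'n \<Rightarrow> 'c set)"

definition shift :: "real^'n \<Rightarrow> real \<Rightarrow> real^'n" where
  "shift s e = (\<chi> i. s $ i + e)"

definition lin_on :: "('b \<Rightarrow> 'k::field) set \<Rightarrow> (('b \<Rightarrow> 'k) \<Rightarrow> ('b \<Rightarrow> 'k)) \<Rightarrow> bool" where
  "lin_on Z F \<longleftrightarrow>
     (\<forall>x\<in>Z. \<forall>y\<in>Z. F (\<lambda>\<sigma>. x \<sigma> + y \<sigma>) = (\<lambda>\<sigma>. F x \<sigma> + F y \<sigma>)) \<and>
     (\<forall>a. \<forall>x\<in>Z. F (\<lambda>\<sigma>. a * x \<sigma>) = (\<lambda>\<sigma>. a * F x \<sigma>))"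

text \<open>A morphism V \<rightarrow> W[e] between such quotient modules: for every s a linear map on
cycle representatives sending Z_V(s) into Z_W(s+e) and B_V(s) into B_W(s+e) (so it induces
a linear map on the quotients), natural modulo boundaries. Every linear map between the
quotients arises this way (lifting over a field).\<close>

definition qmorph :: "real \<Rightarrow> ('n::finite, 'b \<Rightarrow> 'k::field) qpmod \<Rightarrow> ('n, 'b \<Rightarrow> 'k) qpmod
                      \<Rightarrow> (real^'n \<Rightarrow> ('b \<Rightarrow> 'k) \<Rightarrow> ('b \<Rightarrow> 'k)) \<Rightarrow> bool" where
  "qmorph e V W F \<longleftrightarrow>
     (\<forall>s. lin_on (fst V s) (F s)
        \<and> F s ` fst V s \<subseteq> fst W (shift s e)
        \<and> F s ` snd V s \<subseteq> snd W (shift s e)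
        \<and> (\<forall>t. (\<forall>i. s $ i \<le> t $ i) \<longrightarrow>
               (\<forall>z\<in>fst V s. (\<lambda>\<sigma>. F t z \<sigma> - F s z \<sigma>) \<in> snd W (shift t e))))"

text \<open>The composite G[e] \<circ> F equals the structure morphism V \<rightarrow> V[2e].\<close>

definition qcomp_is_shift :: "real \<Rightarrow> ('n::finite, 'b \<Rightarrow> 'k::field) qpmod
                      \<Rightarrow> (real^'n \<Rightarrow> ('b \<Rightarrow> 'k) \<Rightarrow> ('b \<Rightarrow> 'k))
                      \<Rightarrow> (real^'n \<Rightarrow> ('b \<Rightarrow> 'k) \<Rightarrow> ('b \<Rightarrow> 'k)) \<Rightarrow> bool" where
  "qcomp_is_shift e V F G \<longleftrightarrow>
     (\<forall>s. \<forall>z\<in>fst V s. (\<lambda>\<sigma>. G (shift s e) (F s z) \<sigma> - z \<sigma>) \<in> snd V (shift s (2 * e)))"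

definition interleaved :: "real \<Rightarrow> ('n::finite, 'b \<Rightarrow> 'k::field) qpmod \<Rightarrow> ('n, 'b \<Rightarrow> 'k) qpmod \<Rightarrow> bool" where
  "interleaved e V W \<longleftrightarrow>
     (\<exists>F G. qmorph e V W F \<and> qmorph e W V G \<and> qcomp_is_shift e V F G \<and> qcomp_is_shift e W G F)"

text \<open>Interleaving distance (extended; infimum of the empty set is \<infinity>).\<close>

definition interleaving_dist :: "('n::finite, 'b \<Rightarrow> 'k::field) qpmod \<Rightarrow> ('n, 'b \<Rightarrow> 'k) qpmod \<Rightarrow> ereal" where
  "interleaving_dist V W = Inf {ereal e | e. 0 \<le> e \<and> interleaved e V W}"

definition sublevel :: "'a set \<Rightarrow> ('a \<Rightarrow> real^'n) \<Rightarrow> real^'n \<Rightarrow> 'a set" where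
  "sublevel X f s = {x \<in> X. \<forall>i. f x $ i < s $ i}"

definition Hmod :: "'k::field itself \<Rightarrow> nat \<Rightarrow> 'a::topological_space set \<Rightarrow> ('a \<Rightarrow> real^'n::finite)
                    \<Rightarrow> ('n, ((nat \<Rightarrow> real) \<Rightarrow> 'a) \<Rightarrow> 'k) qpmod" where
  "Hmod K k X f = ((\<lambda>s. fcycles k (top_of_set (sublevel X f s))),
                   (\<lambda>s. fboundaries k (top_of_set (sublevel X f s))))"

definition Hdist :: "'k::field itself \<Rightarrow> nat \<Rightarrow> 'a::topological_space set \<Rightarrow> ('a \<Rightarrow> real^'n::finite)
                     \<Rightarrow> ('a \<Rightarrow> real^'n) \<Rightarrow> ereal" where
  "Hdist K k X f g = interleaving_dist (Hmod K k X f) (Hmod K k X g)"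

definition popen :: "('x \<Rightarrow> 'x \<Rightarrow> ereal) \<Rightarrow> 'x set \<Rightarrow> bool" where
  "popen \<rho> U \<longleftrightarrow> (\<forall>x\<in>U. \<exists>e>0. \<forall>y. \<rho> x y < ereal e \<longrightarrow> y \<in> U)"

definition pcompact :: "('x \<Rightarrow> 'x \<Rightarrow> ereal) \<Rightarrow> 'x set \<Rightarrow> bool" where
  "pcompact \<rho> K \<longleftrightarrow>
     (\<forall>\<U>. (\<forall>U\<in>\<U>. popen \<rho> U) \<and> K \<subseteq> \<Union>\<U> \<longrightarrow> (\<exists>\<V>\<subseteq>\<U>. finite \<V> \<and> K \<subseteq> \<Union>\<V>))"

end

theory Submission
  imports Defs "HOL-Complex_Analysis.Great_Picard"
begin


lemma fchain_mono: "fchain p (top_of_set S) c \<Longrightarrow> S \<subseteq> T \<Longrightarrow> fchain p (top_of_set T) c"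
  unfolding fchain_def using singular_simplex_mono by blast

lemma fcycles_mono: "S \<subseteq> T \<Longrightarrow> fcycles p (top_of_set S) \<subseteq> fcycles p (top_of_set T)"
  unfolding fcycles_def using fchain_mono by blast

lemma fboundaries_mono: "S \<subseteq> T \<Longrightarrow> fboundaries p (top_of_set S) \<subseteq> fboundaries p (top_of_set T)"
  unfolding fboundaries_def using fchain_mono by blast

lemma zero_fboundaries: "(\<lambda>\<sigma>. 0::'k::field) \<in> fboundaries p (T::'a topology)"
proof -
  have "fchain (Suc p) T (\<lambda>\<sigma>::(nat \<Rightarrow> real) \<Rightarrow> 'a. 0::'k::field)" by (simp add: fchain_def)
  moreover have "fboundary (Suc p) (\<lambda>\<sigma>::(nat \<Rightarrow> real) \<Rightarrow> 'a. 0::'k) = (\<lambda>\<sigma>. 0)" by (simp add: fboundary_def)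
  ultimately show ?thesis unfolding fboundaries_def by force
qed

lemma sublevel_mono:
  assumes "\<forall>x\<in>X. \<forall>i. \<bar>f x $ i - g x $ i\<bar> \<le> e"
  shows "sublevel X f s \<subseteq> sublevel X g (shift s e)"
  using assms unfolding sublevel_def shift_def
  by (auto simp: abs_le_iff) (smt (verit))

lemma interleaved_id:
  assumes "\<And>s. sublevel X f s \<subseteq> sublevel X g (shift s e)"
    and "\<And>s. sublevel X g s \<subseteq> sublevel X f (shift s e)"
  shows "interleaved e (Hmod K k X f) (Hmod K k X g)"
proof -
  have lin: "lin_on Z (\<lambda>z. z)" for Z :: "(((nat \<Rightarrow> real) \<Rightarrow> 'a) \<Rightarrow> 'k::field) set"
    by (simp add: lin_on_def)
  have q: "qmorph e (Hmod K k X f1) (Hmod K k X g1) (\<lambda>s z. z)"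
    if h: "\<And>s. sublevel X f1 s \<subseteq> sublevel X g1 (shift s e)" for f1 g1
    unfolding qmorph_def Hmod_def fst_conv snd_conv
  proof (intro allI conjI ballI impI)
    fix s
    show "lin_on (fcycles k (top_of_set (sublevel X f1 s))) (\<lambda>z. z)" by (simp add: lin_on_def)
    show "(\<lambda>z. z) ` fcycles k (top_of_set (sublevel X f1 s)) \<subseteq> fcycles k (top_of_set (sublevel X g1 (shift s e)))"
      using fcycles_mono[OF h] by simp
    show "(\<lambda>z. z) ` fboundaries k (top_of_set (sublevel X f1 s)) \<subseteq> fboundaries k (top_of_set (sublevel X g1 (shift s e)))"
      using fboundaries_mono[OF h] by simp
    fix t z
    show "(\<lambda>\<sigma>. z \<sigma> - z \<sigma>) \<in> fboundaries k (top_of_set (sublevel X g1 (shift t e)))"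
      using zero_fboundaries by simp
  qed
  have q1: "qmorph e (Hmod K k X f) (Hmod K k X g) (\<lambda>s z. z)" using q assms(1) by blast
  have q2: "qmorph e (Hmod K k X g) (Hmod K k X f) (\<lambda>s z. z)" using q assms(2) by blast
  show ?thesis unfolding interleaved_def
    apply (rule exI[of _ "\<lambda>s z. z"], rule exI[of _ "\<lambda>s z. z"])
    using q1 q2 by (simp add: qcomp_is_shift_def Hmod_def zero_fboundaries)
qed

lemma Hdist_le:
  assumes "0 \<le> e" "\<forall>x\<in>X. \<forall>i. \<bar>f x $ i - g x $ i\<bar> \<le> e"
  shows "Hdist K k X f g \<le> ereal e"
proof -
  have "\<forall>x\<in>X. \<forall>i. \<bar>g x $ i - f x $ i\<bar> \<le> e" using assms(2) by (simp add: abs_minus_commute)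
  then have "interleaved e (Hmod K k X f) (Hmod K k X g)"
    using interleaved_id sublevel_mono assms(2) by blast
  then show ?thesis unfolding Hdist_def interleaving_dist_def
    using assms(1) by (intro Inf_lower) auto
qed



lemma ascoli_seq:
  fixes fs :: "nat \<Rightarrow> 'a::metric_space \<Rightarrow> real^'n::finite" and K :: "'e::euclidean_space set"
  assumes K: "compact K" and h: "homeomorphism X K \<phi> \<psi>"
    and bnd: "\<And>m x i. x \<in> X \<Longrightarrow> 0 \<le> fs m x $ i \<and> fs m x $ i \<le> 1"
    and lip: "\<And>m x y. x \<in> X \<Longrightarrow> y \<in> X \<Longrightarrow> dist (fs m x) (fs m y) \<le> L * dist x y"
  obtains g r where "strict_mono (r::nat\<Rightarrow>nat)" "uniform_limit X (fs \<circ> r) g sequentially"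
proof -
  define F where "F n y = fs n (\<psi> y)" for n y
  have psiK: "\<psi> y \<in> X" if "y \<in> K" for y using h that unfolding homeomorphism_def by blast
  have contpsi: "continuous_on K \<psi>" using h unfolding homeomorphism_def by blast
  have M: "norm (F n y) \<le> real CARD('n)" if "y \<in> K" for n y
  proof -
    have "norm (F n y) \<le> (\<Sum>i\<in>UNIV. \<bar>F n y $ i\<bar>)" by (rule norm_le_l1_cart)
    also have "\<dots> \<le> (\<Sum>i\<in>(UNIV::'n set). 1)"
      by (intro sum_mono) (use bnd psiK that in \<open>auto simp: F_def\<close>)
    finally show ?thesis by simp
  qed
  define L' where "L' = max L 1"
  have L'pos: "L' > 0" by (simp add: L'_def)
  have equi: "\<exists>d. 0 < d \<and> (\<forall>n y. y \<in> K \<and> norm(x - y) < d \<longrightarrow> norm(F n x - F n y) < e)"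
    if "x \<in> K" "0 < e" for x e
  proof -
    obtain d where d: "d > 0" "\<forall>x'\<in>K. dist x' x < d \<longrightarrow> dist (\<psi> x') (\<psi> x) < e / L'"
    proof -
      have "e / L' > 0" using \<open>0 < e\<close> L'pos by simp
      moreover have "\<forall>x\<in>K. \<forall>\<epsilon>>0. \<exists>\<delta>>0. \<forall>x'\<in>K. dist x' x < \<delta> \<longrightarrow> dist (\<psi> x') (\<psi> x) < \<epsilon>"
        using contpsi unfolding continuous_on_iff .
      ultimately show ?thesis using that \<open>x \<in> K\<close> by blast
    qed
    show ?thesis
    proof (intro exI conjI allI impI)
      fix n y assume y: "y \<in> K \<and> norm (x - y) < d"
      then have "dist (\<psi> y) (\<psi> x) < e / L'" using d by (simp add: dist_norm norm_minus_commute)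
      moreover have "dist (fs n (\<psi> x)) (fs n (\<psi> y)) \<le> L * dist (\<psi> x) (\<psi> y)"
        using lip psiK y that by blast
      moreover have "L * dist (\<psi> x) (\<psi> y) \<le> L' * dist (\<psi> x) (\<psi> y)"
        by (intro mult_right_mono) (auto simp: L'_def)
      moreover have "L' * dist (\<psi> x) (\<psi> y) < L' * (e / L')"
      proof -
        have "dist (\<psi> x) (\<psi> y) < e / L'" using \<open>dist (\<psi> y) (\<psi> x) < e / L'\<close> by (simp add: dist_commute)
        then show ?thesis using mult_strict_left_mono[OF _ L'pos] by blast
      qed
      ultimately have "dist (fs n (\<psi> x)) (fs n (\<psi> y)) < L' * (e / L')"
        by linarith
      then show "norm (F n x - F n y) < e" using L'pos by (simp add: F_def dist_norm)
    qed (use d in auto)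
  qed
  obtain g0 r where g0: "continuous_on K g0" "strict_mono (r :: nat \<Rightarrow> nat)"
     "\<And>e. 0 < e \<Longrightarrow> \<exists>N. \<forall>n x. n \<ge> N \<and> x \<in> K \<longrightarrow> norm(F (r n) x - g0 x) < e"
  proof (rule Arzela_Ascoli[OF K, of F "real CARD('n)"])
    show "\<And>n x. x \<in> K \<Longrightarrow> norm (F n x) \<le> real CARD('n)" using M .
    show "\<And>x e. x \<in> K \<Longrightarrow> 0 < e \<Longrightarrow> \<exists>d>0. \<forall>n y. y \<in> K \<and> norm (x - y) < d \<longrightarrow> norm (F n x - F n y) < e"
      using equi by blast
  qed blast
  have phiK: "\<phi> x \<in> K" "\<psi> (\<phi> x) = x" if "x \<in> X" for x using h that unfolding homeomorphism_def by auto
  have "uniform_limit X (fs \<circ> r) (g0 \<circ> \<phi>) sequentially"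
    unfolding uniform_limit_sequentially_iff
  proof (intro allI impI)
    fix e :: real assume "e > 0"
    then obtain N where N: "\<forall>n x. n \<ge> N \<and> x \<in> K \<longrightarrow> norm(F (r n) x - g0 x) < e" using g0(3) by blast
    show "\<exists>N. \<forall>n\<ge>N. \<forall>x\<in>X. dist ((fs \<circ> r) n x) ((g0 \<circ> \<phi>) x) < e"
    proof (intro exI allI impI ballI)
      fix n x assume "N \<le> n" "x \<in> X"
      then show "dist ((fs \<circ> r) n x) ((g0 \<circ> \<phi>) x) < e"
        using N[rule_format, of n "\<phi> x"] phiK[of x] by (auto simp: F_def dist_norm)
    qed
  qed
  then show ?thesis using that g0(2) by blast
qed



lemma min1_tri: "(a::real) \<le> b + c \<Longrightarrow> 0 \<le> b \<Longrightarrow> 0 \<le> c \<Longrightarrow> min 1 a \<le> min 1 b + min 1 c"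
  by (auto simp: min_def)

theorem proposition5p3:
  fixes X :: "'a::metric_space set"
    and \<T> :: "'e::euclidean_space set set"
    and A :: "('a \<Rightarrow> real^'n::finite) set"
    and k :: nat
  assumes triang: "simplicial_complex \<T>" "X homeomorphic \<Union>\<T>"
    and cont: "\<forall>f\<in>A. continuous_on X f \<and> (\<forall>x\<in>X. \<forall>i. 0 \<le> f x $ i \<and> f x $ i \<le> 1)"
    and lip: "\<exists>L. \<forall>f\<in>A. \<forall>x\<in>X. \<forall>y\<in>X. dist (f x) (f y) \<le> L * dist x y"
    and closed: "\<forall>fs g. (\<forall>m. fs m \<in> A) \<and> uniform_limit X fs g sequentially
                   \<longrightarrow> (\<exists>h\<in>A. \<forall>x\<in>X. h x = g x)"
  shows "pcompact (Hdist TYPE('k::field) k X) A"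
proof -
  obtain L where L: "\<forall>f\<in>A. \<forall>x\<in>X. \<forall>y\<in>X. dist (f x) (f y) \<le> L * dist x y" using lip by blast
  have cpt: "compact (\<Union>\<T>)" using triang(1) unfolding simplicial_complex_def
    by (metis compact_Union compact_simplex)
  obtain \<phi> \<psi> where hom: "homeomorphism X (\<Union>\<T>) \<phi> \<psi>" using triang(2) unfolding homeomorphic_def by blast
  have Heq: "Hdist TYPE('k) k X f g \<le> 0" if "\<forall>x\<in>X. f x = g x" for f g :: "'a \<Rightarrow> real^'n"
    using Hdist_le[of 0 X f g] that by (simp add: zero_ereal_def)
  show ?thesis
  proof (cases "X = {}")
    case True
    show ?thesis unfolding pcompact_def
    proof (intro allI impI)
      fix \<U> assume U: "(\<forall>U\<in>\<U>. popen (Hdist TYPE('k) k X) U) \<and> A \<subseteq> \<Union>\<U>"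
      show "\<exists>\<V>\<subseteq>\<U>. finite \<V> \<and> A \<subseteq> \<Union>\<V>"
      proof (cases "A = {}")
        case True then show ?thesis by blast
      next
        case False
        then obtain f0 where "f0 \<in> A" by blast
        then obtain U where "U \<in> \<U>" "f0 \<in> U" using U by blast
        then obtain e where e: "e>0" "\<forall>y. Hdist TYPE('k) k X f0 y < ereal e \<longrightarrow> y \<in> U"
          using U unfolding popen_def by blast
        have "Hdist TYPE('k) k X f0 y < ereal e" for y
          using Heq[of f0 y] True e(1) by (simp add: le_less_trans)
        then have "A \<subseteq> U" using e(2) by blast
        then show ?thesis using \<open>U \<in> \<U>\<close> by (intro exI[of _ "{U}"]) auto
      qed
    qed
  next
    case False
    define R where "R f = restrict f X" for f :: "'a \<Rightarrow> real^'n"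
    define M where "M = R ` A"
    define d where "d r r' = (SUP x\<in>X. min 1 (dist (r x) (r' x)))" for r r' :: "'a \<Rightarrow> real^'n"
    have bdd: "bdd_above ((\<lambda>x. min 1 (dist (r x) (r' x))) ` X)" for r r' :: "'a \<Rightarrow> real^'n"
      by (rule bdd_aboveI[of _ 1]) auto
    have d_ge: "min 1 (dist (r x) (r' x)) \<le> d r r'" if "x \<in> X" for r r' x
      unfolding d_def by (rule cSUP_upper[OF that bdd])
    have d_le: "d r r' \<le> c" if "\<forall>x\<in>X. min 1 (dist (r x) (r' x)) \<le> c" for r r' c
      unfolding d_def using False that by (intro cSUP_least) auto
    obtain x0 where x0: "x0 \<in> X" using False by blast
    have dnn: "0 \<le> d x y" for x y
    proof -
      have "0 \<le> min 1 (dist (x x0) (y x0))" by simp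
      then show ?thesis using d_ge[OF x0, of x y] by linarith
    qed
    have ms: "Metric_space M d"
    proof
      show "0 \<le> d x y" for x y by (rule dnn)
      show "d x y = d y x" for x y unfolding d_def by (simp add: dist_commute)
      show "d x y = 0 \<longleftrightarrow> x = y" if "x \<in> M" "y \<in> M" for x y
      proof
        assume d0: "d x y = 0"
        have "x z = y z" for z
        proof (cases "z \<in> X")
          case True
          have "min 1 (dist (x z) (y z)) \<le> d x y" by (rule d_ge[OF True])
          then have "min 1 (dist (x z) (y z)) \<le> 0" unfolding d0 .
          then have "dist (x z) (y z) \<le> 0" by (cases "1 \<le> dist (x z) (y z)") (auto simp: min_def)
          then show ?thesis using dist_le_zero_iff by blast
        next
          case False
          then show ?thesis using that by (auto simp: M_def R_def)
        qed
        then show "x = y" by blast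
      next
        assume "x = y"
        then show "d x y = 0" using d_le[of x y 0] dnn[of x y] by simp
      qed
      show "d x z \<le> d x y + d y z" for x y z
      proof (rule d_le, intro ballI)
        fix w assume w: "w \<in> X"
        have "dist (x w) (z w) \<le> dist (x w) (y w) + dist (y w) (z w)" by (rule dist_triangle)
        then have "min 1 (dist (x w) (z w)) \<le> min 1 (dist (x w) (y w)) + min 1 (dist (y w) (z w))"
          by (rule min1_tri) simp_all
        also have "\<dots> \<le> d x y + d y z" using d_ge[OF w, of x y] d_ge[OF w, of y z] by linarith
        finally show "min 1 (dist (x w) (z w)) \<le> d x y + d y z" .
      qed
    qed
    interpret ms: Metric_space M d by (rule ms)
    have Hclose: "Hdist TYPE('k) k X f g \<le> ereal c" if "d (R f) (R g) < c" "c \<le> 1" for f g c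
    proof (rule Hdist_le)
      show "0 \<le> c" using dnn[of "R f" "R g"] that by linarith
      show "\<forall>x\<in>X. \<forall>i. \<bar>f x $ i - g x $ i\<bar> \<le> c"
      proof (intro ballI allI)
        fix x i assume x: "x \<in> X"
        have "min 1 (dist (f x) (g x)) < c" using d_ge[OF x, of "R f" "R g"] that x by (simp add: R_def)
        then have "dist (f x) (g x) < c" using that by (auto simp: min_def split: if_splits)
        moreover have "\<bar>f x $ i - g x $ i\<bar> \<le> dist (f x) (g x)"
          using component_le_norm_cart[of "f x - g x" i] by (simp add: dist_norm)
        ultimately show "\<bar>f x $ i - g x $ i\<bar> \<le> c" by linarith
      qed
    qed
    have cs: "compact_space ms.mtopology"
      unfolding ms.compact_space_sequentially
    proof (intro allI impI)
      fix \<sigma> :: "nat \<Rightarrow> 'a \<Rightarrow> real^'n" assume "range \<sigma> \<subseteq> M"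
      then have "\<forall>m. \<exists>f. f \<in> A \<and> \<sigma> m = R f" by (auto simp: M_def)
      then obtain fs where fs: "\<And>m. fs m \<in> A" "\<And>m. \<sigma> m = R (fs m)" by metis
      obtain g r where r: "strict_mono (r::nat\<Rightarrow>nat)" "uniform_limit X (fs \<circ> r) g sequentially"
      proof (rule ascoli_seq[OF cpt hom, of fs L])
        show "\<And>m x i. x \<in> X \<Longrightarrow> 0 \<le> fs m x $ i \<and> fs m x $ i \<le> 1" using cont fs(1) by blast
        show "\<And>m x y. x \<in> X \<Longrightarrow> y \<in> X \<Longrightarrow> dist (fs m x) (fs m y) \<le> L * dist x y" using L fs(1) by blast
      qed
      obtain h where h: "h \<in> A" "\<forall>x\<in>X. h x = g x" using closed r(2) fs(1) by (metis comp_apply)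
      show "\<exists>l r. l \<in> M \<and> strict_mono r \<and> limitin ms.mtopology (\<sigma> \<circ> r) l sequentially"
      proof (intro exI conjI)
        show "R h \<in> M" using h by (simp add: M_def)
        show "strict_mono r" by (rule r(1))
        show "limitin ms.mtopology (\<sigma> \<circ> r) (R h) sequentially"
          unfolding ms.limit_metric_sequentially
        proof (intro conjI allI impI)
          show "R h \<in> M" using h by (simp add: M_def)
          fix \<epsilon> :: real assume "\<epsilon> > 0"
          then obtain N where N: "\<forall>n\<ge>N. \<forall>x\<in>X. dist ((fs \<circ> r) n x) (g x) < \<epsilon>/2"
            using r(2) unfolding uniform_limit_sequentially_iff by (meson half_gt_zero)
          show "\<exists>N. \<forall>n\<ge>N. (\<sigma> \<circ> r) n \<in> M \<and> d ((\<sigma> \<circ> r) n) (R h) < \<epsilon>"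
          proof (intro exI allI impI conjI)
            fix n assume n: "N \<le> n"
            show "(\<sigma> \<circ> r) n \<in> M" using fs by (simp add: M_def)
            have "d ((\<sigma> \<circ> r) n) (R h) \<le> \<epsilon>/2"
            proof (rule d_le, intro ballI)
              fix x assume x: "x \<in> X"
              have "dist (fs (r n) x) (h x) < \<epsilon>/2" using N n x h(2) by simp
              then show "min 1 (dist ((\<sigma> \<circ> r) n x) (R h x)) \<le> \<epsilon>/2"
                using x fs(2) by (simp add: R_def)
            qed
            then show "d ((\<sigma> \<circ> r) n) (R h) < \<epsilon>" using \<open>\<epsilon> > 0\<close> by linarith
          qed
        qed
      qed
    qed
    show ?thesis unfolding pcompact_def
    proof (intro allI impI)
      fix \<U> assume U: "(\<forall>U\<in>\<U>. popen (Hdist TYPE('k) k X) U) \<and> A \<subseteq> \<Union>\<U>"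
      define W where "W U = R ` (U \<inter> A)" for U
      have Wopen: "openin ms.mtopology (W U)" if "U \<in> \<U>" for U
        unfolding ms.openin_mtopology
      proof (intro conjI allI impI)
        show "W U \<subseteq> M" by (auto simp: W_def M_def)
        fix x assume "x \<in> W U"
        then obtain f where f: "f \<in> U" "f \<in> A" "x = R f" by (auto simp: W_def)
        have pU: "popen (Hdist TYPE('k) k X) U" using U that by blast
        obtain e where e: "e>0" "\<forall>y. Hdist TYPE('k) k X f y < ereal e \<longrightarrow> y \<in> U"
          using pU f(1) unfolding popen_def by blast
        show "\<exists>r>0. ms.mball x r \<subseteq> W U"
        proof (intro exI conjI subsetI)
          show "min e 1 / 2 > 0" using e by simp
          fix y assume "y \<in> ms.mball x (min e 1 / 2)"
          then have y: "y \<in> M" "d x y < min e 1 / 2" by auto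
          then obtain g where g: "g \<in> A" "y = R g" by (auto simp: M_def)
          have "Hdist TYPE('k) k X f g \<le> ereal (min e 1 / 2)"
            using Hclose[of f g "min e 1 / 2"] y f g by simp
          also have "\<dots> < ereal e" using e by simp
          finally have "g \<in> U" using e by blast
          then show "y \<in> W U" using g by (auto simp: W_def)
        qed
      qed
      have "M \<subseteq> \<Union>(W ` \<U>)"
      proof
        fix r assume "r \<in> M"
        then obtain f where f: "f \<in> A" "r = R f" by (auto simp: M_def)
        then obtain U where "U \<in> \<U>" "f \<in> U" using U by blast
        then have "r \<in> W U" using f by (auto simp: W_def)
        then show "r \<in> \<Union>(W ` \<U>)" using \<open>U \<in> \<U>\<close> by blast
      qed
      moreover have "compactin ms.mtopology M"
        using cs unfolding compact_space_def by simp
      ultimately obtain \<F> where F: "finite \<F>" "\<F> \<subseteq> W ` \<U>" "M \<subseteq> \<Union>\<F>"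
        unfolding compactin_def using Wopen by (metis (no_types, lifting) imageE)
      then obtain \<V> where V: "\<V> \<subseteq> \<U>" "finite \<V>" "\<F> = W ` \<V>"
        using finite_subset_image by metis
      have "A \<subseteq> \<Union>\<V>"
      proof
        fix f assume "f \<in> A"
        then have "R f \<in> M" by (simp add: M_def)
        then obtain V where "V \<in> \<V>" "R f \<in> W V" using F V by auto
        then obtain g where g: "g \<in> V" "g \<in> A" "R f = R g" by (auto simp: W_def)
        have "\<forall>x\<in>X. g x = f x"
          using g(3) by (metis R_def restrict_apply')
        then have H0: "Hdist TYPE('k) k X g f \<le> 0" by (rule Heq)
        have pV: "popen (Hdist TYPE('k) k X) V" using U \<open>V \<in> \<V>\<close> V(1) by blast
        obtain e where e: "e>0" "\<forall>y. Hdist TYPE('k) k X g y < ereal e \<longrightarrow> y \<in> V"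
          using pV g(1) unfolding popen_def by blast
        have "Hdist TYPE('k) k X g f < ereal e" using H0 e(1) by (simp add: le_less_trans)
        then have "f \<in> V" using e(2) by blast
        then show "f \<in> \<Union>\<V>" using \<open>V \<in> \<V>\<close> by blast
      qed
      then show "\<exists>\<V>'\<subseteq>\<U>. finite \<V>' \<and> A \<subseteq> \<Union>\<V>'" using V by blast
    qed
  qed
qed

end
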